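(* Let $M$ be a totally ordered finite monoid and $P\subseteq M^3$ an edge selector. Then for every $d\in\mathbb{N}$, there is no bad forest path of length greater than $2$ all of whose members belong to $\mathrm{Reg}_d$.
   Context: For $m$ in a monoid $M$, $J(m)=\{xmy:x,y\in M\}$; $M$ is totally ordered if for all $a,b$, $J(ab)=J(a)$ or $J(ab)=J(b)$. $e\in M$ is idempotent if $e^2=e$. A monoid-labelled graph over $M$ is a tuple $\mathcal{G}=(m,V,E,\lambda)$ with $m\in M$ (the evaluation of $\mathcal{G}$), $V$ a finite vertex set, $E\colon V\times V\to(M^2\to\{\top,\bot\})$ and $\lambda\colon V\to M^2$ such that $\lambda(x)=(l_x,r_x)$ satisfies $l_xr_x=m$ for all $x$. For $a,b\in M$, $a\mathcal{G}b$ has the same vertices, evaluation $amb$, labels $(al_x,r_xb)$ and edge function $(x,y)\mapsto((s,t)\mapsto E(x,y)(sa,bt))$. The downcasting $\mathrm{dc}(\mathcal{G})$ is the graph on $V$ in which distinct $x,y$ are adjacent iff $E(x,y)(1_M,1_M)=\top$. An edge selector is a fixed set $P\subseteq M^3$. The binary product $\mathcal{G}_1\odot\mathcal{G}_2$ of $\mathcal{G}_i=(m_i,V_i,E_i,\lambda_i)$ has vertex set $V_1\sqcup V_2$, evaluation $m_1m_2$, label $(l_x,r_xm_2)$ for $x\in V_1$ with $\lambda_1(x)=(l_x,r_x)$, label $(m_1l_y,r_y)$ for $y\in V_2$ with $\lambda_2(y)=(l_y,r_y)$, edge function $E_1(x,x')(s,m_2t)$ on $V_1$, $E_2(y,y')(sm_1,t)$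 on $V_2$, and for $x\in V_1,y\in V_2$: $E(x,y)(s,t)=E(y,x)(s,t)=\top$ iff $(sl_x,r_xl_y,r_yt)\in P$. This product is associative. For a finite nonempty sequence $\mathcal{G}_1,\dots,\mathcal{G}_n$ all evaluating to the same idempotent $e$, the idempotent product $\bigodot_i\mathcal{G}_i$ is $\mathcal{G}_1\odot\cdots\odot\mathcal{G}_n$. $\mathrm{Reg}_0$ is the class of monoid-labelled graphs with one vertex; $\mathrm{Reg}_{k+1}$ consists of all $\mathcal{G}_1\odot\mathcal{G}_2$ with $\mathcal{G}_1,\mathcal{G}_2\in\mathrm{Reg}_k$ and all idempotent products of finite nonempty sequences in $\mathrm{Reg}_k$ evaluating to a common idempotent. A sequence $\mathcal{G}_1,\dots,\mathcal{G}_n$ all evaluating to an idempotent $e$ (length $n$) is a good forest path if for all $a,b\in M$ there is a sequence $\mathcal{H}_1,\dots,\mathcal{H}_k$ of monoid-labelled graphs evaluating to $e$ and a graph embedding $h$ from $\mathrm{dc}(a(\bigodot_i\mathcal{G}_i)b)$ to $\mathrm{dc}(a(\bigodot_j\mathcal{H}_j)b)$ such that: $h$ maps each vertex $x$ of $\mathcal{G}_i$ to a vertex of some $\mathcal{H}_j$ carrying the same label in $\mathcal{H}_j$ as $x$ has in $\mathcal{G}_i$; $h$ maps $\mathcal{G}_1$ into $\mathcal{H}_1$ and $\mathcal{G}_n$ into $\mathcal{H}_k$; and some $\mathcal{H}_j$ contains no vertex of the image of $h$. Otherwise it is a bad forest path. Graph embeddings are injective maps with $\{h(u),h(v)\}$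 an edge iff $\{u,v\}$ is. *)

theory Defs
  imports Main
begin

text \<open>Monoid-labelled graphs over a monoid 'm. Vertices are drawn from the countably
infinite type nat list; disjoint unions are realised by tagging with 0 # _ / 1 # _.\<close>

record 'm mlg =
  ev   :: 'm
  verts :: "nat list set"
  edg  :: "nat list \<Rightarrow> nat list \<Rightarrow> 'm \<Rightarrow> 'm \<Rightarrow> bool"
  lab  :: "nat list \<Rightarrow> 'm \<times> 'm"

definition Jideal :: "'m::monoid_mult \<Rightarrow> 'm set" where
  "Jideal m = {x * m * y | x y. True}"

definition totally_ordered_monoid :: "'m::monoid_mult itself \<Rightarrow> bool" where
  "totally_ordered_monoid _ \<longleftrightarrow>
     (\<forall>a b :: 'm. Jideal (a * b) = Jideal a \<or> Jideal (a * b) = Jideal b)"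

definition wf_mlg :: "'m::monoid_mult mlg \<Rightarrow> bool" where
  "wf_mlg G \<longleftrightarrow> finite (verts G) \<and>
     (\<forall>x\<in>verts G. fst (lab G x) * snd (lab G x) = ev G)"

definition act :: "'m::monoid_mult \<Rightarrow> 'm mlg \<Rightarrow> 'm \<Rightarrow> 'm mlg" where
  "act a G b = \<lparr> ev = a * ev G * b, verts = verts G,
     edg = (\<lambda>x y s t. edg G x y (s * a) (b * t)),
     lab = (\<lambda>x. (a * fst (lab G x), snd (lab G x) * b)) \<rparr>"

definition dc_adj :: "'m::monoid_mult mlg \<Rightarrow> nat list \<Rightarrow> nat list \<Rightarrow> bool" where
  "dc_adj G x y \<longleftrightarrow> x \<noteq> y \<and> edg G x y 1 1"

definition dc_embedding :: "'m::monoid_mult mlg \<Rightarrow> 'm mlg \<Rightarrow> (nat list \<Rightarrow> nat list) \<Rightarrow> bool" where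
  "dc_embedding G H h \<longleftrightarrow>
     (\<forall>x\<in>verts G. h x \<in> verts H) \<and> inj_on h (verts G) \<and>
     (\<forall>x\<in>verts G. \<forall>y\<in>verts G. dc_adj G x y \<longleftrightarrow> dc_adj H (h x) (h y))"

definition bprod :: "('m::monoid_mult \<times> 'm \<times> 'm) set \<Rightarrow> 'm mlg \<Rightarrow> 'm mlg \<Rightarrow> 'm mlg" where
  "bprod P G1 G2 = \<lparr> ev = ev G1 * ev G2,
     verts = (Cons 0) ` verts G1 \<union> (Cons 1) ` verts G2,
     edg = (\<lambda>v w s t.
        if hd v = 0 \<and> hd w = 0 then edg G1 (tl v) (tl w) s (ev G2 * t)
        else if hd v = 1 \<and> hd w = 1 then edg G2 (tl v) (tl w) (s * ev G1) t
        else if hd v = 0 \<and> hd w = 1 then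
          (s * fst (lab G1 (tl v)), snd (lab G1 (tl v)) * fst (lab G2 (tl w)),
           snd (lab G2 (tl w)) * t) \<in> P
        else if hd v = 1 \<and> hd w = 0 then
          (s * fst (lab G1 (tl w)), snd (lab G1 (tl w)) * fst (lab G2 (tl v)),
           snd (lab G2 (tl v)) * t) \<in> P
        else False),
     lab = (\<lambda>v. if hd v = 0 then (fst (lab G1 (tl v)), snd (lab G1 (tl v)) * ev G2)
                else (ev G1 * fst (lab G2 (tl v)), snd (lab G2 (tl v)))) \<rparr>"

text \<open>Iterated product G1 \<odot> (G2 \<odot> (... \<odot> Gn)) of a nonempty list (associativity
  makes the bracketing irrelevant up to isomorphism).\<close>
fun iprod :: "('m::monoid_mult \<times> 'm \<times> 'm) set \<Rightarrow> 'm mlg list \<Rightarrow> 'm mlg" where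
  "iprod P [] = undefined"
| "iprod P [G] = G"
| "iprod P (G # H # Gs) = bprod P G (iprod P (H # Gs))"

text \<open>vpos n i x: the vertex of the iterated product of a list of length n that
  corresponds to vertex x of the i-th factor (0-based).\<close>
fun vpos :: "nat \<Rightarrow> nat \<Rightarrow> nat list \<Rightarrow> nat list" where
  "vpos 0 i x = x"
| "vpos (Suc 0) i x = x"
| "vpos (Suc (Suc n)) 0 x = 0 # x"
| "vpos (Suc (Suc n)) (Suc i) x = 1 # vpos (Suc n) i x"

fun Reg :: "('m::monoid_mult \<times> 'm \<times> 'm) set \<Rightarrow> nat \<Rightarrow> 'm mlg set" where
  "Reg P 0 = {G. wf_mlg G \<and> card (verts G) = 1}"
| "Reg P (Suc k) =
     {bprod P G1 G2 | G1 G2. G1 \<in> Reg P k \<and> G2 \<in> Reg P k} \<union>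
     {iprod P Gs | Gs. Gs \<noteq> [] \<and> set Gs \<subseteq> Reg P k \<and>
        (\<exists>e. e * e = e \<and> (\<forall>G\<in>set Gs. ev G = e))}"

definition forest_path :: "'m::monoid_mult mlg list \<Rightarrow> bool" where
  "forest_path Gs \<longleftrightarrow> Gs \<noteq> [] \<and> (\<forall>G\<in>set Gs. wf_mlg G) \<and>
     (\<exists>e. e * e = e \<and> (\<forall>G\<in>set Gs. ev G = e))"

definition good_forest_path :: "('m::monoid_mult \<times> 'm \<times> 'm) set \<Rightarrow> 'm mlg list \<Rightarrow> bool" where
  "good_forest_path P Gs \<longleftrightarrow>
    (let n = length Gs; e = ev (hd Gs) in
     \<forall>a b. \<exists>Hs h. let k = length Hs in
       Hs \<noteq> [] \<and> (\<forall>H\<in>set Hs. wf_mlg H \<and> ev H = e) \<and>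
       dc_embedding (act a (iprod P Gs) b) (act a (iprod P Hs) b) h \<and>
       (\<forall>i<n. \<forall>x\<in>verts (Gs ! i). \<exists>j<k. \<exists>y\<in>verts (Hs ! j).
           h (vpos n i x) = vpos k j y \<and> lab (Hs ! j) y = lab (Gs ! i) x) \<and>
       (\<forall>x\<in>verts (Gs ! 0). \<exists>y\<in>verts (Hs ! 0). h (vpos n 0 x) = vpos k 0 y) \<and>
       (\<forall>x\<in>verts (Gs ! (n - 1)). \<exists>y\<in>verts (Hs ! (k - 1)).
           h (vpos n (n - 1) x) = vpos k (k - 1) y) \<and>
       (\<exists>j<k. \<forall>y\<in>verts (Hs ! j). vpos k j y \<notin> h ` verts (iprod P Gs)))"

definition bad_forest_path :: "('m::monoid_mult \<times> 'm \<times> 'm) set \<Rightarrow> 'm mlg list \<Rightarrow> bool" where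
  "bad_forest_path P Gs \<longleftrightarrow> forest_path Gs \<and> \<not> good_forest_path P Gs"

end

theory Submission
  imports Defs
begin


lemma pow_sandwich:
  fixes A B g :: "'m::monoid_mult"
  assumes "g = A * g * B"
  shows "g = A^k * g * B^k"
proof (induction k)
  case 0 then show ?case by simp
next
  case (Suc k)
  have "A^Suc k * g * B^Suc k = A^k * (A * g * B) * B^k"
    unfolding power_Suc2[of A] power_Suc[of B] by (simp add: mult.assoc)
  also have "\<dots> = g" using Suc assms by simp
  finally show ?case by simp
qed

lemma finite_pair_repeat:
  fixes f :: "nat \<Rightarrow> 'a::finite"
  shows "\<exists>i j. i < j \<and> f i = f j"
proof -
  have "\<not> inj f"
  proof
    assume "inj f"
    then have "finite (UNIV::nat set)"
      using finite_imageD[of f UNIV] by simp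
    then show False by simp
  qed
  then obtain i j where "i \<noteq> j" "f i = f j" unfolding inj_def by blast
  then show ?thesis
    by (metis linorder_neqE_nat)
qed

lemma core_stab:
  fixes A B g :: "'m::{monoid_mult,finite}"
  assumes "g = A * g * B"
  shows "\<exists>d>0. g = A^d * g \<and> g = g * B^d"
proof -
  obtain i j where ij: "i < j" "(A^i, B^i) = (A^j, B^j)"
    using finite_pair_repeat[of "\<lambda>k. (A^k, B^k)"] by blast
  define d where "d = j - i"
  have d: "d > 0" "j = i + d" using ij d_def by auto
  have gi: "g = A^i * g * B^i" using pow_sandwich[OF assms] .
  have AB: "A^j = A^i" "B^j = B^i" using ij by auto
  have "g * B^d = (A^i * g * B^i) * B^d" by (rule arg_cong[where f="\<lambda>x. x * B^d"]) (rule gi)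
  also have "\<dots> = A^i * g * (B^i * B^d)" by (simp add: mult.assoc)
  also have "\<dots> = A^i * g * B^j" using d by (simp add: power_add)
  also have "\<dots> = g" using AB gi by simp
  finally have 1: "g = g * B^d" by simp
  have "A^d * g = A^d * (A^i * g * B^i)" by (rule arg_cong[where f="\<lambda>x. A^d * x"]) (rule gi)
  also have "\<dots> = (A^d * A^i) * g * B^i" by (simp add: mult.assoc)
  also have "\<dots> = A^j * g * B^i" using d by (simp add: power_add add.commute)
  also have "\<dots> = g" using AB gi by simp
  finally have 2: "g = A^d * g" by simp
  show ?thesis using 1 2 d by blast
qed

lemma Jideal_mem: "z \<in> Jideal e \<longleftrightarrow> (\<exists>p q. z = p * e * q)"
  unfolding Jideal_def by auto

lemma Jideal_mult:
  fixes e :: "'m::monoid_mult"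
  assumes "z \<in> Jideal e" shows "p * z * q \<in> Jideal e"
proof -
  obtain x y where "z = x * e * y" using assms unfolding Jideal_mem by blast
  then have "p * z * q = (p * x) * e * (y * q)" by (simp add: mult.assoc)
  then show ?thesis unfolding Jideal_mem by blast
qed

lemma Jideal_multL: "z \<in> Jideal e \<Longrightarrow> p * z \<in> Jideal (e::'m::monoid_mult)"
  using Jideal_mult[of z e p 1] by simp
lemma Jideal_multR: "z \<in> Jideal e \<Longrightarrow> z * q \<in> Jideal (e::'m::monoid_mult)"
  using Jideal_mult[of z e 1 q] by simp

lemma Jideal_sub: "z \<in> Jideal e \<Longrightarrow> Jideal z \<subseteq> Jideal (e::'m::monoid_mult)"
proof
  fix w assume "z \<in> Jideal e" "w \<in> Jideal z"
  then obtain p q where "w = p * z * q" unfolding Jideal_mem by blast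
  then show "w \<in> Jideal e" using Jideal_mult[OF \<open>z \<in> Jideal e\<close>] by simp
qed

lemma Jideal_self: "z \<in> Jideal (z::'m::monoid_mult)"
  unfolding Jideal_mem by (metis mult_1 mult_1_right)

lemma minhom:
  fixes x y e :: "'m::monoid_mult"
  assumes "totally_ordered_monoid TYPE('m)" "x * y \<in> Jideal e"
  shows "x \<in> Jideal e \<or> y \<in> Jideal e"
proof -
  have s: "Jideal (x*y) \<subseteq> Jideal e" using Jideal_sub[OF assms(2)] .
  from assms(1) have "Jideal (x*y) = Jideal x \<or> Jideal (x*y) = Jideal y"
    unfolding totally_ordered_monoid_def by blast
  then show ?thesis using s Jideal_self[of x] Jideal_self[of y] by auto
qed

lemma stabL:
  fixes e L R :: "'m::{monoid_mult,finite}"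
  assumes "e * e = e" "L * R = e" "L \<in> Jideal e"
  shows "e * L = L"
proof -
  obtain p q where pq: "L = p * e * q" using assms(3) unfolding Jideal_mem by blast
  have "p * (L * R) * q = L" by (simp only: assms(2)) (rule pq[symmetric])
  then have "L = p * L * (R * q)" by (simp add: mult.assoc)
  then obtain d where d: "d > 0" "L = L * (R*q)^d"
    using core_stab[of L p "R*q"] by blast
  obtain d' where "d = Suc d'" using d by (cases d) auto
  then have "L = L * R * q * (R*q)^d'" using d by (simp add: power_Suc mult.assoc)
  then have "L = e * (q * (R*q)^d')" using assms(2) by (simp add: mult.assoc)
  then show ?thesis using assms(1) by (metis mult.assoc)
qed

lemma stabR:
  fixes e L R :: "'m::{monoid_mult,finite}"
  assumes "e * e = e" "L * R = e" "R \<in> Jideal e"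
  shows "R * e = R"
proof -
  obtain p q where pq: "R = p * e * q" using assms(3) unfolding Jideal_mem by blast
  have "p * (L * R) * q = R" by (simp only: assms(2)) (rule pq[symmetric])
  then have "R = (p * L) * R * q" by (simp add: mult.assoc)
  then obtain d where d: "d > 0" "R = (p*L)^d * R"
    using core_stab[of R "p*L" q] by blast
  obtain d' where "d = Suc d'" using d by (cases d) auto
  then have "R = (p*L)^d' * p * (L * R)" using d by (simp del: power_Suc add: power_Suc2 mult.assoc)
  then have "R = ((p*L)^d' * p) * e" using assms(2) by (simp add: mult.assoc)
  then show ?thesis using assms(1) by (metis mult.assoc)
qed

lemma gamma_lemma:
  fixes e L R g :: "'m::{monoid_mult,finite}"
  assumes "e * e = e" "L * g * R = e" "g \<in> Jideal e"
  shows "g * R * L * g = g"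
proof -
  obtain p q where pq: "g = p * e * q" using assms(3) unfolding Jideal_mem by blast
  have "p * (L * g * R) * q = g" by (simp only: assms(2)) (rule pq[symmetric])
  then have "g = (p * L) * g * (R * q)" by (simp add: mult.assoc)
  then obtain d where d: "d > 0" "g = (p*L)^d * g"
    using core_stab[of g "p*L" "R*q"] by blast
  obtain d' where "d = Suc d'" using d by (cases d) auto
  then have tau: "g = ((p*L)^d' * p) * (L * g)" using d by (simp del: power_Suc add: power_Suc2 mult.assoc)
  have eLg: "e * (L * g) = L * g"
    using stabL[OF assms(1), of "L*g" R] assms Jideal_multL[OF assms(3), of L] by (simp add: mult.assoc)
  have "g * R * L * g = ((p*L)^d' * p) * ((L * g * R) * (L * g))"
    by (subst tau) (simp add: mult.assoc)
  also have "\<dots> = ((p*L)^d' * p) * (L * g)" using assms(2) eLg by simp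
  also have "\<dots> = g" using tau by simp
  finally show ?thesis .
qed



definition wl :: "nat list \<times> 'm \<times> 'm \<Rightarrow> 'm" where "wl w = fst (snd w)"
definition wr :: "nat list \<times> 'm \<times> 'm \<Rightarrow> 'm" where "wr w = snd (snd w)"
definition pl :: "(nat list \<times> 'm \<times> 'm) list \<Rightarrow> 'm::monoid_mult" where
  "pl ws = prod_list (map (\<lambda>w. wl w * wr w) ws)"

lemma pl_Nil[simp]: "pl [] = 1" by (simp add: pl_def)
lemma pl_Cons[simp]: "pl (w # ws) = wl w * wr w * pl ws" by (simp add: pl_def mult.assoc)
lemma pl_append[simp]: "pl (xs @ ys) = pl xs * pl ys" by (simp add: pl_def)

definition tagw :: "nat \<Rightarrow> nat list \<times> 'm \<times> 'm \<Rightarrow> nat list \<times> 'm \<times> 'm" where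
  "tagw k w = (k # fst w, snd w)"

lemma tagw_simps[simp]: "fst (tagw k w) = k # fst w" "wl (tagw k w) = wl w" "wr (tagw k w) = wr w"
  by (auto simp: tagw_def wl_def wr_def)

lemma pl_map_tagw[simp]: "pl (map (tagw k) ws) = pl ws"
  by (induction ws) auto

definition repr :: "('m::monoid_mult \<times> 'm \<times> 'm) set \<Rightarrow> 'm mlg \<Rightarrow> (nat list \<times> 'm \<times> 'm) list \<Rightarrow> bool" where
  "repr P G ws \<longleftrightarrow> distinct (map fst ws) \<and> fst ` set ws = verts G \<and> ev G = pl ws \<and>
     (\<forall>as w bs. ws = as @ w # bs \<longrightarrow> lab G (fst w) = (pl as * wl w, wr w * pl bs)) \<and>
     (\<forall>as u bs v cs s t. ws = as @ u # bs @ v # cs \<longrightarrow>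
        (edg G (fst u) (fst v) s t \<longleftrightarrow> (s * pl as * wl u, wr u * pl bs * wl v, wr v * pl cs * t) \<in> P) \<and>
        (edg G (fst v) (fst u) s t \<longleftrightarrow> (s * pl as * wl u, wr u * pl bs * wl v, wr v * pl cs * t) \<in> P))"

lemma split1:
  "xs @ ys = as @ w # bs \<Longrightarrow> (\<exists>bs'. xs = as @ w # bs' \<and> bs = bs' @ ys) \<or> (\<exists>as'. ys = as' @ w # bs \<and> as = xs @ as')"
proof (induction xs arbitrary: as)
  case Nil then show ?case by auto
next
  case (Cons x xs)
  show ?case
  proof (cases as)
    case Nil then show ?thesis using Cons.prems by auto
  next
    case (Cons a as1)
    then have "xs @ ys = as1 @ w # bs" "x = a" using Cons.prems by auto
    from Cons.IH[OF this(1)] show ?thesis using \<open>x = a\<close> Cons by auto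
  qed
qed

lemma map_split1:
  "map f xs = as @ w # bs \<Longrightarrow> \<exists>as1 w1 bs1. xs = as1 @ w1 # bs1 \<and> as = map f as1 \<and> w = f w1 \<and> bs = map f bs1"
  by (auto simp: map_eq_append_conv map_eq_Cons_conv)

lemma split2:
  assumes "xs @ ys = as @ u # bs @ v # cs"
  shows "(\<exists>c'. xs = as @ u # bs @ v # c' \<and> cs = c' @ ys) \<or>
         (\<exists>b1 b2. xs = as @ u # b1 \<and> ys = b2 @ v # cs \<and> bs = b1 @ b2) \<or>
         (\<exists>a'. ys = a' @ u # bs @ v # cs \<and> as = xs @ a')"
proof -
  from split1[OF assms] show ?thesis
  proof
    assume "\<exists>bs'. xs = as @ u # bs' \<and> bs @ v # cs = bs' @ ys"
    then obtain bs' where 1: "xs = as @ u # bs'" "bs' @ ys = bs @ v # cs" by auto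
    from split1[OF 1(2)] show ?thesis using 1 by auto
  next
    assume "\<exists>as'. ys = as' @ u # bs @ v # cs \<and> as = xs @ as'"
    then show ?thesis by auto
  qed
qed

lemma ev_bprod[simp]: "ev (bprod P A B) = ev A * ev B" by (simp add: bprod_def)
lemma verts_bprod[simp]: "verts (bprod P A B) = Cons 0 ` verts A \<union> Cons 1 ` verts B" by (simp add: bprod_def)
lemma lab_bprod0[simp]: "lab (bprod P A B) (0 # x) = (fst (lab A x), snd (lab A x) * ev B)" by (simp add: bprod_def)
lemma lab_bprod1[simp]: "lab (bprod P A B) (1 # x) = (ev A * fst (lab B x), snd (lab B x))" by (simp add: bprod_def)
lemma edg_bprod00[simp]: "edg (bprod P A B) (0 # x) (0 # y) s t = edg A x y s (ev B * t)" by (simp add: bprod_def)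
lemma edg_bprod11[simp]: "edg (bprod P A B) (1 # x) (1 # y) s t = edg B x y (s * ev A) t" by (simp add: bprod_def)
lemma edg_bprod01[simp]: "edg (bprod P A B) (0 # x) (1 # y) s t =
   ((s * fst (lab A x), snd (lab A x) * fst (lab B y), snd (lab B y) * t) \<in> P)" by (simp add: bprod_def)
lemma edg_bprod10[simp]: "edg (bprod P A B) (1 # y) (0 # x) s t =
   ((s * fst (lab A x), snd (lab A x) * fst (lab B y), snd (lab B y) * t) \<in> P)" by (simp add: bprod_def)

lemmas bprod_Suc0[simp] = lab_bprod1[unfolded One_nat_def] edg_bprod11[unfolded One_nat_def]
  edg_bprod01[unfolded One_nat_def] edg_bprod10[unfolded One_nat_def]

lemma repr_bprod:
  assumes r1: "repr P A ws1" and r2: "repr P B ws2"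
  shows "repr P (bprod P A B) (map (tagw 0) ws1 @ map (tagw 1) ws2)"
proof -
  let ?ws = "map (tagw 0) ws1 @ map (tagw 1) ws2"
  have d: "distinct (map fst ?ws)"
    using r1 r2 unfolding repr_def by (auto simp: distinct_map inj_on_def comp_def)
  have "fst ` set ?ws = Cons 0 ` (fst ` set ws1) \<union> Cons 1 ` (fst ` set ws2)"
    by (simp add: image_Un image_image)
  then have v: "fst ` set ?ws = verts (bprod P A B)"
    using r1 r2 unfolding repr_def by simp
  have e: "ev (bprod P A B) = pl ?ws" using r1 r2 unfolding repr_def by simp
  have l: "lab (bprod P A B) (fst w) = (pl as * wl w, wr w * pl bs)" if "?ws = as @ w # bs" for as w bs
  proof -
    from split1[OF that] show ?thesis
    proof
      assume "\<exists>bs'. map (tagw 0) ws1 = as @ w # bs' \<and> bs = bs' @ map (tagw 1) ws2"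
      then obtain bs' where 1: "map (tagw 0) ws1 = as @ w # bs'" "bs = bs' @ map (tagw 1) ws2" by auto
      from map_split1[OF 1(1)] obtain as1 w1 bs1 where
        2: "ws1 = as1 @ w1 # bs1" "as = map (tagw 0) as1" "w = tagw 0 w1" "bs' = map (tagw 0) bs1" by auto
      have "lab A (fst w1) = (pl as1 * wl w1, wr w1 * pl bs1)" using r1 2(1) unfolding repr_def by blast
      then show ?thesis using 1 2 r2 unfolding repr_def by (simp add: mult.assoc)
    next
      assume "\<exists>as'. map (tagw 1) ws2 = as' @ w # bs \<and> as = map (tagw 0) ws1 @ as'"
      then obtain as' where 1: "map (tagw 1) ws2 = as' @ w # bs" "as = map (tagw 0) ws1 @ as'" by auto
      from map_split1[OF 1(1)] obtain as1 w1 bs1 where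
        2: "ws2 = as1 @ w1 # bs1" "as' = map (tagw 1) as1" "w = tagw 1 w1" "bs = map (tagw 1) bs1" by auto
      have "lab B (fst w1) = (pl as1 * wl w1, wr w1 * pl bs1)" using r2 2(1) unfolding repr_def by blast
      then show ?thesis using 1 2 r1 unfolding repr_def by (simp add: mult.assoc)
    qed
  qed
  have ed: "(edg (bprod P A B) (fst u) (fst v) s t \<longleftrightarrow> (s * pl as * wl u, wr u * pl bs * wl v, wr v * pl cs * t) \<in> P) \<and>
        (edg (bprod P A B) (fst v) (fst u) s t \<longleftrightarrow> (s * pl as * wl u, wr u * pl bs * wl v, wr v * pl cs * t) \<in> P)"
    if "?ws = as @ u # bs @ v # cs" for as u bs v cs s t
  proof -
    from split2[OF that] consider
      (LL) c' where "map (tagw 0) ws1 = as @ u # bs @ v # c'" "cs = c' @ map (tagw 1) ws2"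
    | (LR) b1 b2 where "map (tagw 0) ws1 = as @ u # b1" "map (tagw 1) ws2 = b2 @ v # cs" "bs = b1 @ b2"
    | (RR) a' where "map (tagw 1) ws2 = a' @ u # bs @ v # cs" "as = map (tagw 0) ws1 @ a'"
      by blast
    then show ?thesis
    proof cases
      case LL
      from map_split1[OF LL(1)] obtain as1 u1 r1' where
        a: "ws1 = as1 @ u1 # r1'" "as = map (tagw 0) as1" "u = tagw 0 u1" "bs @ v # c' = map (tagw 0) r1'" by auto
      from map_split1[OF a(4)[symmetric]] obtain bs1 v1 cs1 where
        b: "r1' = bs1 @ v1 # cs1" "bs = map (tagw 0) bs1" "v = tagw 0 v1" "c' = map (tagw 0) cs1" by auto
      have "ws1 = as1 @ u1 # bs1 @ v1 # cs1" using a b by simp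
      then have E: "(edg A (fst u1) (fst v1) s' t' \<longleftrightarrow> (s' * pl as1 * wl u1, wr u1 * pl bs1 * wl v1, wr v1 * pl cs1 * t') \<in> P) \<and>
        (edg A (fst v1) (fst u1) s' t' \<longleftrightarrow> (s' * pl as1 * wl u1, wr u1 * pl bs1 * wl v1, wr v1 * pl cs1 * t') \<in> P)" for s' t'
        using r1 unfolding repr_def by blast
      show ?thesis using E[of s "ev B * t"] a b LL r2 unfolding repr_def by (simp add: mult.assoc)
    next
      case LR
      from map_split1[OF LR(1)] obtain as1 u1 bs1 where
        a: "ws1 = as1 @ u1 # bs1" "as = map (tagw 0) as1" "u = tagw 0 u1" "b1 = map (tagw 0) bs1" by auto
      from map_split1[OF LR(2)] obtain bs2 v2 cs2 where
        b: "ws2 = bs2 @ v2 # cs2" "b2 = map (tagw 1) bs2" "v = tagw 1 v2" "cs = map (tagw 1) cs2" by auto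
      have la: "lab A (fst u1) = (pl as1 * wl u1, wr u1 * pl bs1)" using r1 a(1) unfolding repr_def by blast
      have lb: "lab B (fst v2) = (pl bs2 * wl v2, wr v2 * pl cs2)" using r2 b(1) unfolding repr_def by blast
      show ?thesis using a b LR la lb by (simp add: mult.assoc)
    next
      case RR
      from map_split1[OF RR(1)] obtain as1 u1 r1' where
        a: "ws2 = as1 @ u1 # r1'" "a' = map (tagw 1) as1" "u = tagw 1 u1" "bs @ v # cs = map (tagw 1) r1'" by auto
      from map_split1[OF a(4)[symmetric]] obtain bs1 v1 cs1 where
        b: "r1' = bs1 @ v1 # cs1" "bs = map (tagw 1) bs1" "v = tagw 1 v1" "cs = map (tagw 1) cs1" by auto
      have "ws2 = as1 @ u1 # bs1 @ v1 # cs1" using a b by simp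
      then have E: "(edg B (fst u1) (fst v1) s' t' \<longleftrightarrow> (s' * pl as1 * wl u1, wr u1 * pl bs1 * wl v1, wr v1 * pl cs1 * t') \<in> P) \<and>
        (edg B (fst v1) (fst u1) s' t' \<longleftrightarrow> (s' * pl as1 * wl u1, wr u1 * pl bs1 * wl v1, wr v1 * pl cs1 * t') \<in> P)" for s' t'
        using r2 unfolding repr_def by blast
      show ?thesis using E[of "s * ev A" t] a b RR r1 unfolding repr_def by (simp add: mult.assoc)
    qed
  qed
  show ?thesis unfolding repr_def using d v e l ed by blast
qed

lemma repr_single:
  assumes "wf_mlg G" "card (verts G) = 1"
  shows "\<exists>ws. repr P G ws"
proof -
  obtain x where vx: "verts G = {x}" using assms(2) card_1_singletonE by blast
  let ?w = "(x, fst (lab G x), snd (lab G x))"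
  have l: "lab G (fst w) = (pl as * wl w, wr w * pl bs)" if "[?w] = as @ w # bs" for as w bs
  proof -
    have "as = [] \<and> w = ?w \<and> bs = []" using that by (cases as) auto
    then show ?thesis by (simp add: wl_def wr_def)
  qed
  have ed: False if "[?w] = as @ u # bs @ v # cs" for as u bs v cs
    using arg_cong[OF that, of length] by simp
  have "ev G = pl [?w]" using assms(1) vx unfolding wf_mlg_def by (simp add: wl_def wr_def)
  then have "repr P G [?w]" unfolding repr_def using vx l ed by auto
  then show ?thesis by blast
qed

lemma repr_iprod:
  "Gs \<noteq> [] \<Longrightarrow> (\<forall>G\<in>set Gs. \<exists>ws. repr P G ws) \<Longrightarrow> \<exists>ws. repr P (iprod P Gs) ws"
proof (induction P Gs rule: iprod.induct)
  case (1 P) then show ?case by simp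
next
  case (2 P G) then show ?case by simp
next
  case (3 P G H Gs)
  then obtain ws1 where "repr P G ws1" by auto
  moreover from 3 obtain ws2 where "repr P (iprod P (H # Gs)) ws2" by auto
  ultimately show ?case using repr_bprod by fastforce
qed

lemma repr_Reg: "G \<in> Reg P d \<Longrightarrow> \<exists>ws. repr P G ws"
proof (induction d arbitrary: G)
  case 0 then show ?case using repr_single by auto
next
  case (Suc d)
  then show ?case
  proof (cases "\<exists>G1 G2. G = bprod P G1 G2 \<and> G1 \<in> Reg P d \<and> G2 \<in> Reg P d")
    case True
    then obtain G1 G2 where "G = bprod P G1 G2" "G1 \<in> Reg P d" "G2 \<in> Reg P d" by blast
    then show ?thesis using Suc.IH repr_bprod by blast
  next
    case False
    then obtain Gs where "G = iprod P Gs" "Gs \<noteq> []" "set Gs \<subseteq> Reg P d" using Suc.prems by auto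
    then show ?thesis using Suc.IH repr_iprod by blast
  qed
qed



lemma hdJ:
  fixes e :: "'m::monoid_mult"
  assumes "wl (hd ws) \<in> Jideal e" "ws = as @ w # bs"
  shows "pl as * wl w \<in> Jideal e"
proof (cases as)
  case Nil then show ?thesis using assms by simp
next
  case (Cons a as')
  then have "pl as * wl w = wl (hd ws) * (wr a * pl as' * wl w)" using assms(2) by (simp add: mult.assoc)
  then show ?thesis using Jideal_multR[OF assms(1)] by simp
qed

lemma lastJ:
  fixes e :: "'m::monoid_mult"
  assumes "wr (last ws) \<in> Jideal e" "ws = as @ w # bs"
  shows "wr w * pl bs \<in> Jideal e"
proof (cases bs rule: rev_exhaust)
  case Nil then show ?thesis using assms by simp
next
  case (snoc bs' z)
  then have "wr w * pl bs = (wr w * pl bs' * wl z) * wr (last ws)" using assms(2) by (simp add: mult.assoc)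
  then show ?thesis using Jideal_multL[OF assms(1)] by simp
qed

lemma nocut:
  fixes e :: "'m::monoid_mult"
  assumes tot: "totally_ordered_monoid TYPE('m)"
  shows "pl ws \<in> Jideal e \<Longrightarrow> ws \<noteq> [] \<Longrightarrow>
    (\<forall>A B. ws = A @ B \<longrightarrow> A \<noteq> [] \<longrightarrow> B \<noteq> [] \<longrightarrow> wr (last A) \<notin> Jideal e \<and> wl (hd B) \<notin> Jideal e) \<Longrightarrow>
    wl (hd ws) \<in> Jideal e \<or> wr (last ws) \<in> Jideal e"
proof (induction ws)
  case Nil then show ?case by simp
next
  case (Cons w ws)
  show ?case
  proof (cases ws)
    case Nil
    then have "wl w * wr w \<in> Jideal e" using Cons.prems by simp
    then show ?thesis using minhom[OF tot] Nil by auto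
  next
    case (Cons w' rest)
    have cut1: "wr w \<notin> Jideal e \<and> wl w' \<notin> Jideal e"
      using Cons.prems(3)[rule_format, of "[w]" ws] Cons by auto
    have "(wl w * wr w) * pl ws \<in> Jideal e" using Cons.prems(1) by simp
    then have "wl w * wr w \<in> Jideal e \<or> pl ws \<in> Jideal e" using minhom[OF tot] by blast
    then show ?thesis
    proof
      assume "wl w * wr w \<in> Jideal e"
      then show ?thesis using minhom[OF tot] cut1 by fastforce
    next
      assume pws: "pl ws \<in> Jideal e"
      have "\<forall>A B. ws = A @ B \<longrightarrow> A \<noteq> [] \<longrightarrow> B \<noteq> [] \<longrightarrow> wr (last A) \<notin> Jideal e \<and> wl (hd B) \<notin> Jideal e"
      proof (intro allI impI)
        fix A B assume "ws = A @ B" "A \<noteq> []" "B \<noteq> []"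
        then show "wr (last A) \<notin> Jideal e \<and> wl (hd B) \<notin> Jideal e"
          using Cons.prems(3)[rule_format, of "w # A" B] by simp
      qed
      from Cons.IH[OF pws _ this] Cons cut1 show ?thesis by auto
    qed
  qed
qed

lemma partition:
  fixes G :: "'m::{monoid_mult,finite} mlg"
  assumes tot: "totally_ordered_monoid TYPE('m)" and idem: "e * e = e" and evG: "ev G = e"
    and wf: "wf_mlg G" and rp: "repr P G ws"
  shows "\<exists>X. X \<subseteq> verts G \<and> (\<forall>v\<in>verts G - X. e * fst (lab G v) = fst (lab G v)) \<and>
     (\<forall>u\<in>X. snd (lab G u) * e = snd (lab G u)) \<and>
     (\<forall>u\<in>X. \<forall>v\<in>verts G - X. \<forall>s t.
        (edg G u v s t \<longleftrightarrow> (s * fst (lab G u), snd (lab G u) * e * fst (lab G v), snd (lab G v) * t) \<in> P) \<and>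
        (edg G v u s t \<longleftrightarrow> (s * fst (lab G u), snd (lab G u) * e * fst (lab G v), snd (lab G v) * t) \<in> P))"
proof (cases "\<forall>v\<in>verts G. e * fst (lab G v) = fst (lab G v)")
  case True
  then show ?thesis by (intro exI[of _ "{}"]) auto
next
  case F1: False
  show ?thesis
  proof (cases "\<forall>u\<in>verts G. snd (lab G u) * e = snd (lab G u)")
    case True
    then show ?thesis by (intro exI[of _ "verts G"]) auto
  next
    case F2: False
    have LR: "fst (lab G x) * snd (lab G x) = e" if "x \<in> verts G" for x
      using wf that evG unfolding wf_mlg_def by auto
    from F1 obtain v0 where v0: "v0 \<in> verts G" "e * fst (lab G v0) \<noteq> fst (lab G v0)" by blast
    from F2 obtain u0 where u0: "u0 \<in> verts G" "snd (lab G u0) * e \<noteq> snd (lab G u0)" by blast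
    have Lv0: "fst (lab G v0) \<notin> Jideal e" using stabL[OF idem LR[OF v0(1)]] v0 by blast
    have Ru0: "snd (lab G u0) \<notin> Jideal e" using stabR[OF idem LR[OF u0(1)]] u0 by blast
    have dist: "distinct (map fst ws)" and vs: "fst ` set ws = verts G" and pe: "pl ws = e"
      and lb: "\<And>as w bs. ws = as @ w # bs \<Longrightarrow> lab G (fst w) = (pl as * wl w, wr w * pl bs)"
      and ed: "\<And>as u bs v cs s t. ws = as @ u # bs @ v # cs \<Longrightarrow>
        (edg G (fst u) (fst v) s t \<longleftrightarrow> (s * pl as * wl u, wr u * pl bs * wl v, wr v * pl cs * t) \<in> P) \<and>
        (edg G (fst v) (fst u) s t \<longleftrightarrow> (s * pl as * wl u, wr u * pl bs * wl v, wr v * pl cs * t) \<in> P)"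
      using rp evG unfolding repr_def by auto
    have ne: "ws \<noteq> []" using vs v0 by auto
    have eJ: "e \<in> Jideal e" by (rule Jideal_self)
    have hdn: "wl (hd ws) \<notin> Jideal e"
    proof
      assume h: "wl (hd ws) \<in> Jideal e"
      have "v0 \<in> fst ` set ws" using vs v0 by simp
      then obtain w where "w \<in> set ws" "fst w = v0" by (metis imageE)
      then obtain as bs where d: "ws = as @ w # bs" by (metis split_list)
      have "fst (lab G v0) = pl as * wl w" using lb[OF d] \<open>fst w = v0\<close> by simp
      then show False using hdJ[OF h d] Lv0 by simp
    qed
    have lastn: "wr (last ws) \<notin> Jideal e"
    proof
      assume h: "wr (last ws) \<in> Jideal e"
      have "u0 \<in> fst ` set ws" using vs u0 by simp
      then obtain w where "w \<in> set ws" "fst w = u0" by (metis imageE)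
      then obtain as bs where d: "ws = as @ w # bs" by (metis split_list)
      have "snd (lab G u0) = wr w * pl bs" using lb[OF d] \<open>fst w = u0\<close> by simp
      then show False using lastJ[OF h d] Ru0 by simp
    qed
    obtain A B where AB: "ws = A @ B" "A \<noteq> []" "B \<noteq> []" and cut: "wr (last A) \<in> Jideal e \<or> wl (hd B) \<in> Jideal e"
      using nocut[OF tot, of ws e] pe eJ ne hdn lastn by blast
    have Ar: "wr w * pl A2 \<in> Jideal e" if "wr (last A) \<in> Jideal e" "A = A1 @ w # A2" for A1 w A2
      using lastJ[OF that] .
    have Bl: "pl B1 * wl w \<in> Jideal e" if "wl (hd B) \<in> Jideal e" "B = B1 @ w # B2" for B1 w B2
      using hdJ[OF that] .
    have plA: "pl A \<in> Jideal e" if "wr (last A) \<in> Jideal e"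
    proof -
      obtain A' z where "A = A' @ [z]" using AB(2) by (metis rev_exhaust)
      then have "pl A = (pl A' * wl z) * wr (last A)" by (simp add: mult.assoc)
      then show ?thesis using Jideal_multL[OF that] by simp
    qed
    have plB: "pl B \<in> Jideal e" if "wl (hd B) \<in> Jideal e"
    proof -
      obtain z B' where "B = z # B'" using AB(3) by (cases B) auto
      then have "pl B = wl (hd B) * (wr z * pl B')" by (simp add: mult.assoc)
      then show ?thesis using Jideal_multR[OF that] by simp
    qed
    define X where "X = fst ` set A"
    have d2: "fst ` set A \<inter> fst ` set B = {}" using dist AB(1) by simp
    have "verts G = fst ` set A \<union> fst ` set B" using vs AB(1) by (metis image_Un set_append)
    then have Y: "verts G - X = fst ` set B" using d2 unfolding X_def by blast
    have edges: "(edg G u v s t \<longleftrightarrow> (s * fst (lab G u), snd (lab G u) * e * fst (lab G v), snd (lab G v) * t) \<in> P) \<and>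
        (edg G v u s t \<longleftrightarrow> (s * fst (lab G u), snd (lab G u) * e * fst (lab G v), snd (lab G v) * t) \<in> P)"
      if uX: "u \<in> X" and vY: "v \<in> verts G - X" for u v s t
    proof -
      from uX obtain wu where wu: "wu \<in> set A" "fst wu = u" unfolding X_def by auto
      then obtain A1 A2 where A12: "A = A1 @ wu # A2" by (metis split_list)
      obtain wv where wv: "wv \<in> set B" "fst wv = v" using vY Y by auto
      then obtain B1 B2 where B12: "B = B1 @ wv # B2" by (metis split_list)
      have wsd: "ws = A1 @ wu # (A2 @ B1) @ wv # B2" using AB(1) A12 B12 by simp
      define g where "g = wr wu * pl A2 * pl B1 * wl wv"
      define Lu where "Lu = pl A1 * wl wu"
      define Rv where "Rv = wr wv * pl B2"
      have labu: "lab G u = (Lu, g * Rv)"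
        using lb[of A1 wu "A2 @ B"] AB(1) A12 B12 wu(2) unfolding Lu_def g_def Rv_def by (simp add: mult.assoc)
      have labv: "lab G v = (Lu * g, Rv)"
        using lb[of "A @ B1" wv B2] AB(1) A12 B12 wv(2) unfolding Lu_def g_def Rv_def by (simp add: mult.assoc)
      have gJ: "g \<in> Jideal e"
        using cut
      proof
        assume "wr (last A) \<in> Jideal e"
        then have "wr wu * pl A2 \<in> Jideal e" using Ar A12 by blast
        then show ?thesis unfolding g_def using Jideal_multR[of "wr wu * pl A2" e "pl B1 * wl wv"] by (simp add: mult.assoc)
      next
        assume "wl (hd B) \<in> Jideal e"
        then have "pl B1 * wl wv \<in> Jideal e" using Bl B12 by blast
        then show ?thesis unfolding g_def using Jideal_multL[of "pl B1 * wl wv" e "wr wu * pl A2"] by (simp add: mult.assoc)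
      qed
      have "u \<in> verts G" using wu vs AB(1) by auto
      then have eq: "Lu * g * Rv = e" using LR[of u] labu by (simp add: mult.assoc)
      have "Lu * g * (Rv * e) = e" using eq idem by (metis mult.assoc)
      from gamma_lemma[OF idem this gJ] have key: "g * Rv * e * Lu * g = g" by (simp add: mult.assoc)
      have trip: "(s * fst (lab G u), snd (lab G u) * e * fst (lab G v), snd (lab G v) * t) =
                  (s * pl A1 * wl wu, wr wu * pl (A2 @ B1) * wl wv, wr wv * pl B2 * t)"
        using labu labv key unfolding Lu_def Rv_def g_def by (simp add: mult.assoc)
      show ?thesis
        unfolding trip using ed[OF wsd, of s t] wu(2) wv(2) by simp
    qed
    show ?thesis
    proof (intro exI[of _ X] conjI ballI allI)
      show "X \<subseteq> verts G" using vs AB unfolding X_def by auto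
    next
      fix v assume "v \<in> verts G - X"
      then obtain w where w: "w \<in> set B" "fst w = v" using Y by auto
      then obtain B1 B2 where B12: "B = B1 @ w # B2" by (metis split_list)
      have lv: "fst (lab G v) = pl A * (pl B1 * wl w)"
        using lb[of "A @ B1" w B2] AB(1) B12 w(2) by (simp add: mult.assoc)
      have "fst (lab G v) \<in> Jideal e"
        using cut
      proof
        assume "wr (last A) \<in> Jideal e"
        then show ?thesis using lv Jideal_multR[OF plA] by simp
      next
        assume "wl (hd B) \<in> Jideal e"
        then show ?thesis using lv Jideal_multL[OF Bl] B12 by simp
      qed
      then show "e * fst (lab G v) = fst (lab G v)"
        using stabL[OF idem LR, of v] \<open>v \<in> verts G - X\<close> by blast
    next
      fix u assume "u \<in> X"
      then obtain w where w: "w \<in> set A" "fst w = u" unfolding X_def by auto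
      then obtain A1 A2 where A12: "A = A1 @ w # A2" by (metis split_list)
      have ru: "snd (lab G u) = (wr w * pl A2) * pl B"
        using lb[of A1 w "A2 @ B"] AB(1) A12 w(2) by (simp add: mult.assoc)
      have "snd (lab G u) \<in> Jideal e"
        using cut
      proof
        assume "wr (last A) \<in> Jideal e"
        then show ?thesis using ru Jideal_multR[OF Ar] A12 by simp
      next
        assume "wl (hd B) \<in> Jideal e"
        then show ?thesis using ru Jideal_multL[OF plB] by simp
      qed
      moreover have "u \<in> verts G" using w vs AB(1) by auto
      ultimately show "snd (lab G u) * e = snd (lab G u)"
        using stabR[OF idem LR, of u] by blast
    qed (use edges in blast)+
  qed
qed



lemma verts_act[simp]: "verts (act a G b) = verts G" by (simp add: act_def)

lemma vpos_0: "vpos (Suc (Suc m)) 0 x = 0 # x" by simp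
lemma vpos_1: "vpos (Suc (Suc (Suc m))) 1 x = 1 # 0 # x" by (simp add: One_nat_def)
lemma vpos_SS: "i < m \<Longrightarrow> vpos (Suc (Suc m)) (Suc (Suc i)) x = 1 # 1 # vpos m i x"
  by (cases m) auto

lemma iprod_Cons2: "rest \<noteq> [] \<Longrightarrow> iprod P (G # rest) = bprod P G (iprod P rest)"
  by (cases rest) auto


lemma ev_iprod:
  fixes e :: "'m::monoid_mult"
  assumes idem: "e * e = e"
  shows "Gs \<noteq> [] \<Longrightarrow> \<forall>G\<in>set Gs. ev G = e \<Longrightarrow> ev (iprod P Gs) = e"
proof (induction Gs rule: induct_list012)
  case 1 then show ?case by simp
next
  case (2 x) then show ?case by simp
next
  case (3 x y zs)
  have "\<forall>G\<in>set (y # zs). ev G = e" using 3(4) by (meson list.set_intros(2))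
  then have a: "ev (iprod P (y # zs)) = e" using 3(2) by blast
  have b: "ev x = e" by (rule bspec[OF 3(4)]) simp
  have "ev (iprod P (x # y # zs)) = ev x * ev (iprod P (y # zs))" by simp
  then show ?case using a b idem by simp
qed

lemma adj00: "dc_adj (act a (bprod P A B) b) (0 # x) (0 # y) = dc_adj (act a A (ev B * b)) x y"
  unfolding dc_adj_def act_def by simp
lemma adj11: "dc_adj (act a (bprod P A B) b) (1 # x) (1 # y) = dc_adj (act (a * ev A) B b) x y"
  unfolding dc_adj_def act_def by simp
lemma adj01: "dc_adj (act a (bprod P A B) b) (0 # x) (1 # y) =
  ((a * fst (lab A x), snd (lab A x) * fst (lab B y), snd (lab B y) * b) \<in> P)"
  unfolding dc_adj_def act_def by simp
lemma adj10: "dc_adj (act a (bprod P A B) b) (1 # y) (0 # x) =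
  ((a * fst (lab A x), snd (lab A x) * fst (lab B y), snd (lab B y) * b) \<in> P)"
  unfolding dc_adj_def act_def by simp
lemmas adj_Suc0 = adj11[unfolded One_nat_def] adj01[unfolded One_nat_def] adj10[unfolded One_nat_def]

theorem lemma4p5:
  fixes P :: "('m::{monoid_mult, finite} \<times> 'm \<times> 'm) set"
    and d :: nat
    and Gs :: "'m mlg list"
  assumes "totally_ordered_monoid TYPE('m)"
    and "length Gs > 2"
    and "set Gs \<subseteq> Reg P d"
  shows "\<not> bad_forest_path P Gs"
proof
  assume bad: "bad_forest_path P Gs"
  then have fp: "forest_path Gs" and ng: "\<not> good_forest_path P Gs" unfolding bad_forest_path_def by auto
  obtain G1 G2 rest where Gs: "Gs = G1 # G2 # rest" and rne: "rest \<noteq> []"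
    using assms(2) by (cases Gs; cases "tl Gs"; cases "tl (tl Gs)") auto
  from fp obtain e where idem: "e * e = e" and evs: "\<forall>G\<in>set Gs. ev G = e" and wfs: "\<forall>G\<in>set Gs. wf_mlg G"
    unfolding forest_path_def by blast
  have ev1: "ev G1 = e" by (rule bspec[OF evs]) (simp add: Gs)
  have ev2: "ev G2 = e" by (rule bspec[OF evs]) (simp add: Gs)
  have wf1: "wf_mlg G1" by (rule bspec[OF wfs]) (simp add: Gs)
  have wf2: "wf_mlg G2" by (rule bspec[OF wfs]) (simp add: Gs)
  have evr: "\<forall>G\<in>set rest. ev G = e" using evs Gs by (meson list.set_intros(2))
  have wfr: "\<forall>G\<in>set rest. wf_mlg G" using wfs Gs by (meson list.set_intros(2))
  define T where "T = iprod P rest"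
  have evT: "ev T = e" unfolding T_def using ev_iprod[OF idem rne evr] .
  have "G2 \<in> Reg P d" using assms(3) Gs by auto
  then obtain ws where rp: "repr P G2 ws" using repr_Reg by blast
  from partition[OF assms(1) idem ev2 wf2 rp] obtain X where
    Xsub: "X \<subseteq> verts G2" and
    iY: "\<forall>v\<in>verts G2 - X. e * fst (lab G2 v) = fst (lab G2 v)" and
    iiX: "\<forall>u\<in>X. snd (lab G2 u) * e = snd (lab G2 u)" and
    iii: "\<forall>u\<in>X. \<forall>v\<in>verts G2 - X. \<forall>s t.
        (edg G2 u v s t \<longleftrightarrow> (s * fst (lab G2 u), snd (lab G2 u) * e * fst (lab G2 v), snd (lab G2 v) * t) \<in> P) \<and>
        (edg G2 v u s t \<longleftrightarrow> (s * fst (lab G2 u), snd (lab G2 u) * e * fst (lab G2 v), snd (lab G2 v) * t) \<in> P)"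
    by blast
  have iY1: "e * fst (lab G2 v) = fst (lab G2 v)" if "v \<in> verts G2" "v \<notin> X" for v
    using iY that by blast
  have iY2: "e * (fst (lab G2 v) * z) = fst (lab G2 v) * z" if "v \<in> verts G2" "v \<notin> X" for v z
    using iY1[OF that] by (metis mult.assoc)
  have iiX1: "snd (lab G2 u) * e = snd (lab G2 u)" if "u \<in> X" for u
    using iiX that by blast
  have iiX2: "snd (lab G2 u) * (e * z) = snd (lab G2 u) * z" if "u \<in> X" for u z
    using iiX1[OF that] by (metis mult.assoc)
  have iii1: "edg G2 u v s t = ((s * fst (lab G2 u), snd (lab G2 u) * e * fst (lab G2 v), snd (lab G2 v) * t) \<in> P)"
    if "u \<in> X" "v \<in> verts G2" "v \<notin> X" for u v s t
    using iii that by blast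
  have iii2: "edg G2 v u s t = ((s * fst (lab G2 u), snd (lab G2 u) * e * fst (lab G2 v), snd (lab G2 v) * t) \<in> P)"
    if "u \<in> X" "v \<in> verts G2" "v \<notin> X" for u v s t
    using iii that by blast
  have ee: "e * (e * z) = e * z" for z using idem by (metis mult.assoc)
  have finX: "finite X" using Xsub wf2 finite_subset unfolding wf_mlg_def by blast
  have good: "good_forest_path P Gs"
    unfolding good_forest_path_def Let_def
  proof (intro allI)
    fix a b
    define XG where "XG = \<lparr>ev = e, verts = X, edg = edg G2, lab = lab G2\<rparr>"
    define YG where "YG = \<lparr>ev = e, verts = verts G2 - X, edg = edg G2, lab = lab G2\<rparr>"
    define EG where "EG = \<lparr>ev = e, verts = {}, edg = (\<lambda>_ _ _ _. False), lab = (\<lambda>_. (1,1))\<rparr>"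
    define Hs where "Hs = G1 # XG # EG # YG # rest"
    define h where "h = (\<lambda>v::nat list. if hd v = 0 then v else if hd (tl v) = 0 then
        (if tl (tl v) \<in> X then v else 1 # 1 # 1 # 0 # tl (tl v)) else 1 # 1 # 1 # 1 # tl (tl v))"
    have h0: "h (0 # x) = 0 # x" for x by (simp add: h_def)
    have hX: "h (Suc 0 # 0 # y) = Suc 0 # 0 # y" if "y \<in> X" for y using that by (simp add: h_def)
    have hY: "h (Suc 0 # 0 # y) = Suc 0 # Suc 0 # Suc 0 # 0 # y" if "y \<notin> X" for y using that by (simp add: h_def)
    have hT: "h (Suc 0 # Suc 0 # z) = Suc 0 # Suc 0 # Suc 0 # Suc 0 # z" for z by (simp add: h_def)
    have iG: "iprod P Gs = bprod P G1 (bprod P G2 T)" using rne unfolding Gs T_def by (simp add: iprod_Cons2)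
    have iH: "iprod P Hs = bprod P G1 (bprod P XG (bprod P EG (bprod P YG T)))"
      using rne unfolding Hs_def T_def by (simp add: iprod_Cons2)
    have g1: "Hs \<noteq> []" by (simp add: Hs_def)
    have g2: "\<forall>H\<in>set Hs. wf_mlg H \<and> ev H = ev (hd Gs)"
    proof
      fix H assume "H \<in> set Hs"
      then have "H = G1 \<or> H = XG \<or> H = EG \<or> H = YG \<or> H \<in> set rest" by (simp add: Hs_def)
      moreover have "wf_mlg XG" using finX Xsub wf2 ev2 unfolding wf_mlg_def XG_def by auto
      moreover have "wf_mlg YG" using wf2 ev2 unfolding wf_mlg_def YG_def by auto
      moreover have "wf_mlg EG" unfolding wf_mlg_def EG_def by auto
      ultimately show "wf_mlg H \<and> ev H = ev (hd Gs)"
        using wf1 ev1 evr wfr unfolding Gs by (auto simp: XG_def YG_def EG_def)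
    qed
    have cls: "(\<exists>x. x \<in> verts G1 \<and> v = 0 # x) \<or> (\<exists>y. y \<in> X \<and> v = 1 # 0 # y) \<or>
        (\<exists>y. y \<in> verts G2 \<and> y \<notin> X \<and> v = 1 # 0 # y) \<or> (\<exists>z. z \<in> verts T \<and> v = 1 # 1 # z)"
      if "v \<in> verts (bprod P G1 (bprod P G2 T))" for v
      using that by auto
    have neq1: "(u = v) = False" if "u \<in> X" "v \<notin> X" for u v using that by auto
    have neq2: "(v = u) = False" if "u \<in> X" "v \<notin> X" for u v using that by auto
    have g3a: "h v \<in> verts (bprod P G1 (bprod P XG (bprod P EG (bprod P YG T))))"
      if "v \<in> verts (bprod P G1 (bprod P G2 T))" for v
      using cls[OF that] Xsub by (elim disjE exE conjE) (auto simp: h0 hX hY hT XG_def YG_def EG_def)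
    have g3b: "inj_on h (verts (bprod P G1 (bprod P G2 T)))"
    proof (rule inj_onI)
      fix v w assume v: "v \<in> verts (bprod P G1 (bprod P G2 T))" and w: "w \<in> verts (bprod P G1 (bprod P G2 T))"
        and hvw: "h v = h w"
      from cls[OF v] cls[OF w] hvw show "v = w"
        by (elim disjE exE conjE) (simp_all add: h0 hX hY hT)
    qed
    have g3c: "dc_adj (act a (bprod P G1 (bprod P G2 T)) b) v w =
        dc_adj (act a (bprod P G1 (bprod P XG (bprod P EG (bprod P YG T)))) b) (h v) (h w)"
      if v: "v \<in> verts (bprod P G1 (bprod P G2 T))" and w: "w \<in> verts (bprod P G1 (bprod P G2 T))" for v w
      using cls[OF v] cls[OF w]
      by (elim disjE exE conjE)
         (simp_all add: dc_adj_def act_def XG_def YG_def EG_def h0 hX hY hT ev1 ev2 evT idem ee mult.assoc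
            iY1 iY2 iiX1 iiX2 iii1 iii2 neq1 neq2)
    have g3: "dc_embedding (act a (iprod P Gs) b) (act a (iprod P Hs) b) h"
      unfolding dc_embedding_def iG iH verts_act using g3a g3b g3c by blast
    obtain m' where L: "length rest = Suc m'" using rne by (cases rest) auto
    have lG: "length Gs = Suc (Suc (length rest))" by (simp add: Gs)
    have lH: "length Hs = Suc (Suc (Suc (Suc (length rest))))" by (simp add: Hs_def)
    have g4: "\<forall>i<length Gs. \<forall>x\<in>verts (Gs ! i). \<exists>j<length Hs. \<exists>y\<in>verts (Hs ! j).
           h (vpos (length Gs) i x) = vpos (length Hs) j y \<and> lab (Hs ! j) y = lab (Gs ! i) x"
    proof (intro allI impI ballI)
      fix i x assume i: "i < length Gs" and x: "x \<in> verts (Gs ! i)"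
      show "\<exists>j<length Hs. \<exists>y\<in>verts (Hs ! j).
           h (vpos (length Gs) i x) = vpos (length Hs) j y \<and> lab (Hs ! j) y = lab (Gs ! i) x"
      proof (cases i)
        case 0
        then show ?thesis using x h0 lG lH by (intro exI[of _ 0] conjI bexI[of _ x]) (auto simp: Gs Hs_def)
      next
        case (Suc i1)
        show ?thesis
        proof (cases i1)
          case 0
          then have i1: "i = Suc 0" using Suc by simp
          have xv: "x \<in> verts G2" using x i1 by (simp add: Gs)
          have vp: "vpos (length Gs) i x = 1 # 0 # x" using i1 lG L by simp
          show ?thesis
          proof (cases "x \<in> X")
            case True
            then show ?thesis using vp hX lH L i1
              by (intro exI[of _ "Suc 0"] conjI bexI[of _ x]) (auto simp: Gs Hs_def XG_def)
          next
            case False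
            then show ?thesis using vp hY lH L i1 xv
              by (intro exI[of _ "Suc (Suc (Suc 0))"] conjI bexI[of _ x]) (auto simp: Gs Hs_def YG_def)
          qed
        next
          case (Suc i')
          then have ii: "i = Suc (Suc i')" using \<open>i = Suc i1\<close> by simp
          have i'L: "i' < length rest" using i ii lG by simp
          have xv: "x \<in> verts (rest ! i')" using x ii by (simp add: Gs)
          have vp: "vpos (length Gs) i x = 1 # 1 # vpos (length rest) i' x" using ii lG vpos_SS[OF i'L] by simp
          have vp2: "vpos (length Hs) (Suc (Suc (Suc (Suc i')))) x = 1 # 1 # 1 # 1 # vpos (length rest) i' x"
            using lH vpos_SS[OF i'L] vpos_SS[of "Suc (Suc i')" "Suc (Suc (length rest))"] i'L by simp
          show ?thesis using vp vp2 hT lH i'L xv ii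
            by (intro exI[of _ "Suc (Suc (Suc (Suc i')))"] conjI bexI[of _ x]) (auto simp: Gs Hs_def)
        qed
      qed
    qed
    have g5: "\<forall>x\<in>verts (Gs ! 0). \<exists>y\<in>verts (Hs ! 0). h (vpos (length Gs) 0 x) = vpos (length Hs) 0 y"
      using h0 lG lH by (auto simp: Gs Hs_def)
    have g6: "\<forall>x\<in>verts (Gs ! (length Gs - 1)). \<exists>y\<in>verts (Hs ! (length Hs - 1)).
           h (vpos (length Gs) (length Gs - 1) x) = vpos (length Hs) (length Hs - 1) y"
    proof
      fix x assume x: "x \<in> verts (Gs ! (length Gs - 1))"
      have m'L: "m' < length rest" using L by simp
      have a1: "length Gs - 1 = Suc (Suc m')" using lG L by simp
      have a2: "length Hs - 1 = Suc (Suc (Suc (Suc m')))" using lH L by simp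
      have xv: "x \<in> verts (rest ! m')" using x a1 by (simp add: Gs)
      have vp: "vpos (length Gs) (Suc (Suc m')) x = 1 # 1 # vpos (length rest) m' x" using lG vpos_SS[OF m'L] by simp
      have vp2: "vpos (length Hs) (Suc (Suc (Suc (Suc m')))) x = 1 # 1 # 1 # 1 # vpos (length rest) m' x"
        using lH vpos_SS[OF m'L] vpos_SS[of "Suc (Suc m')" "Suc (Suc (length rest))"] m'L by simp
      show "\<exists>y\<in>verts (Hs ! (length Hs - 1)). h (vpos (length Gs) (length Gs - 1) x) = vpos (length Hs) (length Hs - 1) y"
        using xv vp vp2 hT a1 a2 by (intro bexI[of _ x]) (auto simp: Hs_def)
    qed
    have g7: "\<exists>j<length Hs. \<forall>y\<in>verts (Hs ! j). vpos (length Hs) j y \<notin> h ` verts (iprod P Gs)"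
      using lH by (intro exI[of _ "Suc (Suc 0)"]) (simp add: Hs_def EG_def)
    show "\<exists>Hs h. Hs \<noteq> [] \<and> (\<forall>H\<in>set Hs. wf_mlg H \<and> ev H = ev (hd Gs)) \<and>
       dc_embedding (act a (iprod P Gs) b) (act a (iprod P Hs) b) h \<and>
       (\<forall>i<length Gs. \<forall>x\<in>verts (Gs ! i). \<exists>j<length Hs. \<exists>y\<in>verts (Hs ! j).
           h (vpos (length Gs) i x) = vpos (length Hs) j y \<and> lab (Hs ! j) y = lab (Gs ! i) x) \<and>
       (\<forall>x\<in>verts (Gs ! 0). \<exists>y\<in>verts (Hs ! 0). h (vpos (length Gs) 0 x) = vpos (length Hs) 0 y) \<and>
       (\<forall>x\<in>verts (Gs ! (length Gs - 1)). \<exists>y\<in>verts (Hs ! (length Hs - 1)).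
           h (vpos (length Gs) (length Gs - 1) x) = vpos (length Hs) (length Hs - 1) y) \<and>
       (\<exists>j<length Hs. \<forall>y\<in>verts (Hs ! j). vpos (length Hs) j y \<notin> h ` verts (iprod P Gs))"
      using g1 g2 g3 g4 g5 g6 g7 by blast
  qed
  then show False using ng by simp
qed


end
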